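(* Let $\mathcal{A}$ be a finite-dimensional unital associative algebra over a field $\mathrm{k}$. Then $\mathcal{A}$ has only finitely many subalgebras if and only if $\mathcal{A}$ has only finitely many subalgebras generated by one element (i.e. of the form $\mathrm{k}[y]$, $y\in\mathcal{A}$).
   Context: Subalgebras are unital (contain $1$). *)

theory Defs
  imports Complex_Main
begin

definition fd_algebra :: "('k::field \<Rightarrow> 'a::ring_1 \<Rightarrow> 'a) \<Rightarrow> bool" where
  "fd_algebra scale \<longleftrightarrow>
     vector_space scale \<and>
     (\<forall>c x y. scale c (x * y) = scale c x * y) \<and>
     (\<forall>c x y. scale c (x * y) = x * scale c y) \<and>
     (\<exists>B. finite B \<and> module.span scale B = UNIV)"

definition is_subalgebra :: "('k::field \<Rightarrow> 'a::ring_1 \<Rightarrow> 'a) \<Rightarrow> 'a set \<Rightarrow> bool" where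
  "is_subalgebra scale S \<longleftrightarrow>
     module.subspace scale S \<and> 1 \<in> S \<and> (\<forall>x\<in>S. \<forall>y\<in>S. x * y \<in> S)"

definition gen_subalgebra :: "('k::field \<Rightarrow> 'a::ring_1 \<Rightarrow> 'a) \<Rightarrow> 'a \<Rightarrow> 'a set" where
  "gen_subalgebra scale y = \<Inter> {S. is_subalgebra scale S \<and> y \<in> S}"

end

theory Submission
  imports Defs
begin

lemma gen_sub:
  fixes scale :: "'k::field \<Rightarrow> 'a::ring_1 \<Rightarrow> 'a"
  assumes M: "module scale"
  shows "is_subalgebra scale (gen_subalgebra scale y)"
proof -
  have U: "is_subalgebra scale UNIV"
    using M by (simp add: is_subalgebra_def module.subspace_UNIV)
  show ?thesis
    using M U unfolding gen_subalgebra_def is_subalgebra_def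
    by (auto simp: is_subalgebra_def module.subspace_def[OF M])
qed

lemma gen_mem: "y \<in> gen_subalgebra scale y"
  by (simp add: gen_subalgebra_def)

lemma gen_le: "is_subalgebra scale S \<Longrightarrow> y \<in> S \<Longrightarrow> gen_subalgebra scale y \<subseteq> S"
  by (auto simp: gen_subalgebra_def)

theorem lemma3p9:
  fixes scale :: "'k::field \<Rightarrow> 'a::ring_1 \<Rightarrow> 'a"
  assumes "fd_algebra scale"
  shows "finite {S. is_subalgebra scale S} \<longleftrightarrow> finite (range (gen_subalgebra scale))"
proof -
  have M: "module scale" using assms
    by (simp add: fd_algebra_def vector_space_def module_def)
  show ?thesis
proof
  assume "finite {S. is_subalgebra scale S}"
  moreover have "range (gen_subalgebra scale) \<subseteq> {S. is_subalgebra scale S}"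
    using gen_sub[OF M] by blast
  ultimately show "finite (range (gen_subalgebra scale))" by (rule finite_subset[rotated])
next
  let ?R = "range (gen_subalgebra scale)"
  assume fR: "finite ?R"
  define f where "f S = {T \<in> ?R. T \<subseteq> S}" for S
  have rec: "S = \<Union>(f S)" if "is_subalgebra scale S" for S
  proof
    show "\<Union>(f S) \<subseteq> S" by (auto simp: f_def)
    show "S \<subseteq> \<Union>(f S)"
    proof
      fix y assume "y \<in> S"
      then have "gen_subalgebra scale y \<in> f S" using gen_le[OF that] by (auto simp: f_def)
      then show "y \<in> \<Union>(f S)" using gen_mem by blast
    qed
  qed
  have "inj_on f {S. is_subalgebra scale S}"
    by (rule inj_onI) (metis rec mem_Collect_eq)
  moreover have "f ` {S. is_subalgebra scale S} \<subseteq> Pow ?R" by (auto simp: f_def)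
  hence "finite (f ` {S. is_subalgebra scale S})" using fR by (meson finite_Pow_iff finite_subset)
  ultimately show "finite {S. is_subalgebra scale S}" using finite_imageD by blast
qed
qed

end
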